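(* Let $\mathcal O$ be a non-degenerate conic of $\mathrm{PG}(2,q^2)$ and let $\mathcal Q_\infty,\mathcal Q_0$ be the quadrics of $\mathrm{PG}(4,q)$ associated with $\mathcal O$ (so $[\mathcal O]=\mathcal Q_\infty\cap\mathcal Q_0$). For every $t\in\mathbb F_q\cup\{\infty\}$, the quadric $\mathcal Q_t^\star$ of $\mathrm{PG}(4,q^2)$ with equation $tf_\infty+f_0=0$ (meaning $f_\infty=0$ when $t=\infty$) meets the transversal $g$ in exactly $0$, $1$ or $2$ points according as $\mathcal O$ meets $\ell_\infty$ in $0$, $1$ or $2$ points respectively.
   Context: Coordinates: $q$ a prime power; $\tau$ is a primitive element of $\mathbb F_{q^2}$ with minimal polynomial $x^2-t_1x-t_0$ over $\mathbb F_q$. $\mathrm{PG}(2,q^2)$ has coordinates $(x,y,z)$, $\ell_\infty: z=0$; $\mathrm{PG}(4,q)$ has coordinates $(x_0,x_1,y_0,y_1,z)$ and $\Sigma_\infty: z=0$. The Bruck–Bose map sends the affine point $(x_0+x_1\tau,y_0+y_1\tau,z)$, $x_i,y_i,z\in\mathbb F_q$, $z\ne0$, to $(x_0,x_1,y_0,y_1,z)$, and the point $(\delta,1,0)\in\ell_\infty$, $\delta=d_0+d_1\tau$, to the spread line $\langle(d_0,d_1,1,0,0),(t_0d_1,d_0+t_1d_1,0,1,0)\rangle$ (and $(1,0,0)$ to $\langle(1,0,0,0,0),(0,1,0,0,0)\rangle$); these lines form a regular spread $\mathcal S$ of $\Sigma_\infty$. In $\mathrm{PG}(4,q^2)$ let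 $A_0=(\tau^q,-1,0,0,0)$, $A_1=(0,0,\tau^q,-1,0)$; the transversals of $\mathcal S$ are $g=\langle A_0,A_1\rangle$ and $g^q=\langle A_0^q,A_1^q\rangle$. If $\mathcal O$ has equation $f(x,y,z)=0$ with $f$ a homogeneous quadratic over $\mathbb F_{q^2}$, substituting $x=x_0+x_1\tau$, $y=y_0+y_1\tau$, $z$ and reducing with $\tau^2=t_1\tau+t_0$ gives $f=f_\infty(x_0,x_1,y_0,y_1,z)+\tau f_0(x_0,x_1,y_0,y_1,z)$ with $f_\infty,f_0$ homogeneous quadratics over $\mathbb F_q$; $\mathcal Q_\infty,\mathcal Q_0$ are the quadrics $f_\infty=0$, $f_0=0$ of $\mathrm{PG}(4,q)$. For a quadric $\mathcal Q$ of $\mathrm{PG}(4,q)$, $\mathcal Q^\star$ is the set of points of $\mathrm{PG}(4,q^2)$ satisfying the same equation. *)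

theory Defs
  imports "HOL-Computational_Algebra.Primes"
begin

text \<open>The type 'K is the finite field GF(q^2); GF(q) is its unique subfield
  of order q, i.e. the set of x with x^q = x. Vectors of PG(n-1,q^2) are functions
  nat => 'K vanishing at indices >= n.\<close>

definition prime_power :: "nat \<Rightarrow> bool" where
  "prime_power q \<longleftrightarrow> (\<exists>p k. prime p \<and> k > 0 \<and> q = p ^ k)"

definition Fq :: "nat \<Rightarrow> 'K::field set" where
  "Fq q = {x. x ^ q = x}"

definition primitive_elem :: "'K::field \<Rightarrow> bool" where
  "primitive_elem \<tau> \<longleftrightarrow> (\<forall>x. x \<noteq> 0 \<longrightarrow> (\<exists>n::nat. x = \<tau> ^ n))"

definition coord0 :: "nat \<Rightarrow> 'K::field \<Rightarrow> 'K \<Rightarrow> 'K" where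
  "coord0 q \<tau> c = (THE a. a \<in> Fq q \<and> (\<exists>b \<in> Fq q. c = a + b * \<tau>))"

definition coord1 :: "nat \<Rightarrow> 'K::field \<Rightarrow> 'K \<Rightarrow> 'K" where
  "coord1 q \<tau> c = (THE b. b \<in> Fq q \<and> (\<exists>a \<in> Fq q. c = a + b * \<tau>))"

definition qform :: "nat \<Rightarrow> (nat \<Rightarrow> nat \<Rightarrow> 'K::field) \<Rightarrow> (nat \<Rightarrow> 'K) \<Rightarrow> 'K" where
  "qform n C v = (\<Sum>i<n. \<Sum>j\<in>{i..<n}. C i j * v i * v j)"

text \<open>Non-degenerate (non-singular) conic a x^2 + b y^2 + c z^2 + d xy + e xz + h yz:
  4abc + deh - ah^2 - be^2 - cd^2 \<noteq> 0 (valid in every characteristic).\<close>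
definition nondeg_conic :: "(nat \<Rightarrow> nat \<Rightarrow> 'K::field) \<Rightarrow> bool" where
  "nondeg_conic C \<longleftrightarrow>
     (let a = C 0 0; b = C 1 1; c = C 2 2; d = C 0 1; e = C 0 2; h = C 1 2
      in 4*a*b*c + d*e*h - a*h^2 - b*e^2 - c*d^2 \<noteq> 0)"

text \<open>Substitution matrix: (x,y,z) = (x0 + x1 tau, y0 + y1 tau, z), variables
  (x0,x1,y0,y1,z) have indices 0..4.\<close>
definition bb_mat :: "'K::field \<Rightarrow> nat \<Rightarrow> nat \<Rightarrow> 'K" where
  "bb_mat \<tau> i k =
     (if (i = 0 \<and> k = 0) \<or> (i = 1 \<and> k = 2) \<or> (i = 2 \<and> k = 4) then 1
      else if (i = 0 \<and> k = 1) \<or> (i = 1 \<and> k = 3) then \<tau> else 0)"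

text \<open>Coefficients (over GF(q^2)) of the 5-variable quadratic form f(x0+x1 tau, y0+y1 tau, z).\<close>
definition subst_coeffs :: "'K::field \<Rightarrow> (nat \<Rightarrow> nat \<Rightarrow> 'K) \<Rightarrow> nat \<Rightarrow> nat \<Rightarrow> 'K" where
  "subst_coeffs \<tau> C k l =
     (\<Sum>i<3. \<Sum>j\<in>{i..<3}. C i j *
        (if k = l then bb_mat \<tau> i k * bb_mat \<tau> j k
         else bb_mat \<tau> i k * bb_mat \<tau> j l + bb_mat \<tau> i l * bb_mat \<tau> j k))"

text \<open>f = f_inf + tau f_0 coefficientwise.\<close>
definition f_inf_coeffs :: "nat \<Rightarrow> 'K::field \<Rightarrow> (nat \<Rightarrow> nat \<Rightarrow> 'K) \<Rightarrow> nat \<Rightarrow> nat \<Rightarrow> 'K" where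
  "f_inf_coeffs q \<tau> C k l = coord0 q \<tau> (subst_coeffs \<tau> C k l)"

definition f_0_coeffs :: "nat \<Rightarrow> 'K::field \<Rightarrow> (nat \<Rightarrow> nat \<Rightarrow> 'K) \<Rightarrow> nat \<Rightarrow> nat \<Rightarrow> 'K" where
  "f_0_coeffs q \<tau> C k l = coord1 q \<tau> (subst_coeffs \<tau> C k l)"

text \<open>Equation of Q_t^*: t f_inf + f_0 (t = Some t), or f_inf (t = None, i.e. infinity).\<close>
definition Qt_eval :: "nat \<Rightarrow> 'K::field \<Rightarrow> (nat \<Rightarrow> nat \<Rightarrow> 'K) \<Rightarrow> 'K option \<Rightarrow> (nat \<Rightarrow> 'K) \<Rightarrow> 'K" where
  "Qt_eval q \<tau> C t v =
     (case t of None \<Rightarrow> qform 5 (f_inf_coeffs q \<tau> C) v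
      | Some s \<Rightarrow> s * qform 5 (f_inf_coeffs q \<tau> C) v + qform 5 (f_0_coeffs q \<tau> C) v)"

definition vecs :: "nat \<Rightarrow> (nat \<Rightarrow> 'K::field) set" where
  "vecs n = {v. (\<exists>i. v i \<noteq> 0) \<and> (\<forall>i\<ge>n. v i = 0)}"

definition proj_pt :: "(nat \<Rightarrow> 'K::field) \<Rightarrow> (nat \<Rightarrow> 'K) set" where
  "proj_pt v = {(\<lambda>i. c * v i) | c. c \<noteq> 0}"

text \<open>Points of the conic on l_inf: z = 0.\<close>
definition conic_linf_points :: "(nat \<Rightarrow> nat \<Rightarrow> 'K::field) \<Rightarrow> (nat \<Rightarrow> 'K) set set" where
  "conic_linf_points C = proj_pt ` {w \<in> vecs 3. w 2 = 0 \<and> qform 3 C w = 0}"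

definition A0 :: "nat \<Rightarrow> 'K::field \<Rightarrow> nat \<Rightarrow> 'K" where
  "A0 q \<tau> = (\<lambda>i. if i = 0 then \<tau> ^ q else if i = 1 then -1 else 0)"

definition A1 :: "nat \<Rightarrow> 'K::field \<Rightarrow> nat \<Rightarrow> 'K" where
  "A1 q \<tau> = (\<lambda>i. if i = 2 then \<tau> ^ q else if i = 3 then -1 else 0)"

definition g_vecs :: "nat \<Rightarrow> 'K::field \<Rightarrow> (nat \<Rightarrow> 'K) set" where
  "g_vecs q \<tau> = {v. \<exists>l m. (l, m) \<noteq> (0, 0) \<and> v = (\<lambda>i. l * A0 q \<tau> i + m * A1 q \<tau> i)}"

definition Qt_g_points :: "nat \<Rightarrow> 'K::field \<Rightarrow> (nat \<Rightarrow> nat \<Rightarrow> 'K) \<Rightarrow> 'K option \<Rightarrow> (nat \<Rightarrow> 'K) set set" where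
  "Qt_g_points q \<tau> C t = proj_pt ` {v \<in> g_vecs q \<tau>. Qt_eval q \<tau> C t v = 0}"

end

theory Submission imports Defs "HOL-Number_Theory.Residues" begin

lemma pow_card_same:
  fixes x :: "'K::{field,finite}"
  shows "x ^ card (UNIV :: 'K set) = x"
proof (cases "x = 0")
  case False
  have "x * (\<Prod>y\<in>UNIV-{0}. x * y) = x * x ^ (card (UNIV :: 'K set) - 1) * \<Prod>(UNIV-{0})"
    by (simp add: prod.distrib mult_ac)
  also have "x * x ^ (card (UNIV :: 'K set) - 1) = x ^ Suc (card (UNIV :: 'K set) - 1)"
    by (subst power_Suc) auto
  also have "Suc (card (UNIV :: 'K set) - 1) = card (UNIV :: 'K set)"
    using finite_UNIV_card_ge_0[where ?'a = 'K] by simp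
  also have "(\<Prod>y\<in>UNIV-{0}. x * y) = (\<Prod>y\<in>UNIV-{0}. y)"
    by (rule prod.reindex_bij_witness[of _ "\<lambda>y. y / x" "\<lambda>y. x * y"]) (use False in auto)
  finally show ?thesis
    by simp
qed (use finite_UNIV_card_ge_0[where ?'a = 'K] in auto)

lemma frob_add:
  fixes x y :: "'K::{field,finite}"
  assumes "prime_power q" "card (UNIV :: 'K set) = q ^ 2"
  shows "(x + y) ^ q = x ^ q + y ^ q"
proof -
  obtain p k where pk: "prime p" "k > 0" "q = p ^ k" using assms(1) unfolding prime_power_def by auto
  have cp: "CHAR('K) > 0" by (rule finite_imp_CHAR_pos) simp
  have pc: "prime CHAR('K)" by (rule prime_CHAR_semidom[OF cp])
  have "CHAR('K) dvd p ^ (k * 2)" using CHAR_dvd_CARD[where 'a='K] assms(2) pk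
    by (simp add: power_mult)
  hence "CHAR('K) dvd p" using pc prime_dvd_power by blast
  hence "CHAR('K) = p" using pc pk(1) primes_dvd_imp_eq by blast
  thus ?thesis using freshmans_dream'[OF pc, of q k x y] pk by simp
qed

lemma subst_qform:
  fixes \<tau> :: "'K::field"
  shows "qform 5 (subst_coeffs \<tau> C) v = qform 3 C (\<lambda>i. \<Sum>k<5. bb_mat \<tau> i k * v k)"
  unfolding qform_def subst_coeffs_def bb_mat_def
  by (simp add: numeral_eq_Suc lessThan_Suc atLeastLessThanSuc algebra_simps)

lemma qform_lin:
  "qform n A v + c * qform n B v = qform n (\<lambda>k l. A k l + c * B k l) v"
  unfolding qform_def by (simp add: sum_distrib_left sum.distrib algebra_simps)

lemma g_eval1:
  fixes \<tau> :: "'K::field"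
  shows "qform 5 (subst_coeffs \<tau> C) (\<lambda>i. l * A0 q \<tau> i + m * A1 q \<tau> i)
    = (\<tau>^q - \<tau>)^2 * qform 3 C (\<lambda>i. if i = 0 then l else if i = 1 then m else 0)"
  unfolding subst_qform
  unfolding qform_def bb_mat_def A0_def A1_def
  by (simp add: numeral_eq_Suc lessThan_Suc atLeastLessThanSuc algebra_simps power2_eq_square)

lemma g_eval2:
  fixes \<tau> :: "'K::field"
  shows "qform 5 (subst_coeffs (\<tau>^q) C) (\<lambda>i. l * A0 q \<tau> i + m * A1 q \<tau> i) = 0"
  unfolding subst_qform
  unfolding qform_def bb_mat_def A0_def A1_def
  by (simp add: numeral_eq_Suc lessThan_Suc atLeastLessThanSuc algebra_simps)

lemma pow_sum: fixes f :: "'b \<Rightarrow> 'a::comm_ring_1" assumes "\<And>x y::'a::comm_ring_1. (x + y) ^ q = x ^ q + y ^ q" "q > 0"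
  shows "(sum f A) ^ q = (\<Sum>i\<in>A. f i ^ q)"
  by (induction A rule: infinite_finite_induct) (auto simp: assms power_0_left)

lemma bb_pow: "q > 0 \<Longrightarrow> bb_mat \<tau> i k ^ q = bb_mat (\<tau> ^ q) i k"
  unfolding bb_mat_def by auto

lemma subst_pow:
  fixes \<tau> :: "'K::field"
  assumes "\<And>x y::'K. (x + y) ^ q = x ^ q + y ^ q" "q > 0"
  shows "(subst_coeffs \<tau> C k l) ^ q = subst_coeffs (\<tau>^q) (\<lambda>i j. C i j ^ q) k l"
  unfolding subst_coeffs_def
  apply (simp only: pow_sum[OF assms])
  apply (intro sum.cong refl)
  apply (cases "k = l")
   apply (simp_all only: if_True if_False simp_thms power_mult_distrib assms(1) bb_pow[OF assms(2)])
  done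

lemma key:
  fixes \<tau> :: "'K::field"
  assumes add: "\<And>x y::'K. (x + y) ^ q = x ^ q + y ^ q" and q0: "q > 0"
    and invol: "\<And>x::'K. (x ^ q) ^ q = x"
    and tnF: "\<tau> ^ q \<noteq> \<tau>"
    and dec: "\<And>c. c = coord0 q \<tau> c + coord1 q \<tau> c * \<tau> \<and> coord0 q \<tau> c \<in> Fq q \<and> coord1 q \<tau> c \<in> Fq q"
    and tF: "\<forall>s. t = Some s \<longrightarrow> s \<in> Fq q"
  shows "Qt_eval q \<tau> C t (\<lambda>i. l * A0 q \<tau> i + m * A1 q \<tau> i) = 0 \<longleftrightarrow>
         qform 3 C (\<lambda>i. if i = 0 then l else if i = 1 then m else 0) = 0"
proof -
  define v where "v = (\<lambda>i. l * A0 q \<tau> i + m * A1 q \<tau> i)"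
  define F where "F = qform 3 C (\<lambda>i. if i = 0 then l else if i = 1 then m else 0)"
  define P0 where "P0 = qform 5 (f_inf_coeffs q \<tau> C) v"
  define P1 where "P1 = qform 5 (f_0_coeffs q \<tau> C) v"
  define d where "d = \<tau> ^ q - \<tau>"
  have d0: "d \<noteq> 0" using tnF by (simp add: d_def)
  have t0: "\<tau> \<noteq> 0" using tnF q0 by auto
  have tq0: "\<tau> ^ q \<noteq> 0" using t0 by simp
  have h1: "P0 + \<tau> * P1 = d^2 * F"
  proof -
    have "P0 + \<tau> * P1 = qform 5 (subst_coeffs \<tau> C) v"
    proof -
      have e1: "coord0 q \<tau> c + \<tau> * coord1 q \<tau> c = c" for c
        using dec[of c] by (metis mult.commute)
      show ?thesis unfolding P0_def P1_def qform_lin f_inf_coeffs_def f_0_coeffs_def e1 ..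
    qed
    thus ?thesis unfolding v_def g_eval1 d_def F_def .
  qed
  have h2: "P0 + \<tau>^q * P1 = 0"
  proof -
    have e: "coord0 q \<tau> c + \<tau>^q * coord1 q \<tau> c = c ^ q" for c
    proof -
      have "c ^ q = (coord0 q \<tau> c + coord1 q \<tau> c * \<tau>) ^ q" using dec by metis
      also have "\<dots> = coord0 q \<tau> c ^ q + coord1 q \<tau> c ^ q * \<tau> ^ q"
        by (simp add: add power_mult_distrib)
      also have "\<dots> = coord0 q \<tau> c + \<tau>^q * coord1 q \<tau> c"
        using dec[of c] by (simp add: Fq_def mult.commute)
      finally show ?thesis by simp
    qed
    have "P0 + \<tau>^q * P1 = qform 5 (\<lambda>k l. (subst_coeffs \<tau> C k l) ^ q) v"
      unfolding P0_def P1_def qform_lin f_inf_coeffs_def f_0_coeffs_def e ..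
    also have "\<dots> = qform 5 (subst_coeffs (\<tau>^q) (\<lambda>i j. C i j ^ q)) v"
      by (simp add: subst_pow[OF add q0])
    also have "\<dots> = 0" unfolding v_def by (rule g_eval2)
    finally show ?thesis .
  qed
  have p1: "P1 = - d * F"
  proof -
    have "(\<tau> - \<tau>^q) * P1 = (P0 + \<tau> * P1) - (P0 + \<tau>^q * P1)" by (simp add: algebra_simps)
    also have "\<dots> = d^2 * F" using h1 h2 by simp
    finally have "(\<tau> - \<tau>^q) * P1 = d^2 * F" .
    hence "(- d) * P1 = d * (d * F)" by (simp add: d_def power2_eq_square algebra_simps)
    hence "d * (- P1) = d * (d * F)" by simp
    hence "- P1 = d * F" using d0 mult_left_cancel by blast
    thus ?thesis by (metis minus_minus mult_minus_left)
  qed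
  have p0: "P0 = \<tau>^q * d * F" using h2 p1 by (simp add: algebra_simps eq_neg_iff_add_eq_0)
  show ?thesis
  proof (cases t)
    case None
    have "Qt_eval q \<tau> C t v = \<tau>^q * d * F" using None p0 by (simp add: Qt_eval_def P0_def)
    thus ?thesis using d0 tq0 q0 t0 by (simp add: v_def F_def)
  next
    case (Some s)
    have sF: "s ^ q = s" using tF Some by (simp add: Fq_def)
    have ns: "s * \<tau>^q - 1 \<noteq> 0"
    proof
      assume "s * \<tau>^q - 1 = 0"
      hence a: "s * \<tau>^q = 1" by simp
      hence "(s * \<tau>^q) ^ q = 1" by simp
      hence "s ^ q * (\<tau> ^ q) ^ q = 1" by (simp add: power_mult_distrib)
      hence b: "s * \<tau> = 1" using sF invol by simp
      from a b have "s * \<tau>^q = s * \<tau>" by simp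
      moreover have "s \<noteq> 0" using b by auto
      ultimately show False using tnF by simp
    qed
    have "Qt_eval q \<tau> C t v = d * F * (s * \<tau>^q - 1)" using Some p0 p1
      by (simp add: Qt_eval_def P0_def P1_def algebra_simps)
    thus ?thesis using d0 ns by (simp add: v_def F_def)
  qed
qed


lemma card_part:
  fixes \<tau> :: "'K::field"
  assumes K: "\<And>l m. Qt_eval q \<tau> C t (\<lambda>i. l * A0 q \<tau> i + m * A1 q \<tau> i) = 0 \<longleftrightarrow>
         qform 3 C (\<lambda>i. if i = 0 then l else if i = 1 then m else 0) = 0"
  shows "card (Qt_g_points q \<tau> C t) = card (conic_linf_points C)"
proof -
  define \<phi> where "\<phi> = (\<lambda>u::nat\<Rightarrow>'K. \<lambda>i. u 0 * A0 q \<tau> i + u 1 * A1 q \<tau> i)"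
  define W where "W = {w \<in> vecs 3. w 2 = 0 \<and> qform 3 C w = 0}"
  have wform: "w = (\<lambda>i. if i = 0 then w 0 else if i = 1 then w 1 else 0)" if "w \<in> vecs 3" "w 2 = 0" for w :: "nat \<Rightarrow> 'K"
  proof
    fix i show "w i = (if i = 0 then w 0 else if i = 1 then w 1 else 0)"
      using that unfolding vecs_def by (cases "i = 0 \<or> i = 1 \<or> i = 2") auto
  qed
  have V: "{v \<in> g_vecs q \<tau>. Qt_eval q \<tau> C t v = 0} = \<phi> ` W"
  proof (intro equalityI subsetI)
    fix v assume "v \<in> {v \<in> g_vecs q \<tau>. Qt_eval q \<tau> C t v = 0}"
    then obtain l m where lm: "(l, m) \<noteq> (0, 0)" "v = (\<lambda>i. l * A0 q \<tau> i + m * A1 q \<tau> i)"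
      and Q: "Qt_eval q \<tau> C t v = 0" unfolding g_vecs_def by auto
    define w where "w = (\<lambda>i::nat. if i = 0 then l else if i = 1 then m else 0)"
    have "w \<in> W" unfolding W_def vecs_def using lm Q K unfolding w_def by auto
    moreover have "v = \<phi> w" unfolding \<phi>_def w_def lm by simp
    ultimately show "v \<in> \<phi> ` W" by blast
  next
    fix v assume "v \<in> \<phi> ` W"
    then obtain w where w: "w \<in> W" "v = \<phi> w" by blast
    have wv: "w \<in> vecs 3" "w 2 = 0" "qform 3 C w = 0" using w unfolding W_def by auto
    have nz: "(w 0, w 1) \<noteq> (0, 0)"
    proof
      assume "(w 0, w 1) = (0, 0)"
      hence "w i = 0" for i using wv(1,2) unfolding vecs_def by (cases "i = 0 \<or> i = 1 \<or> i = 2") auto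
      thus False using wv(1) unfolding vecs_def by simp
    qed
    have "qform 3 C (\<lambda>i. if i = 0 then w 0 else if i = 1 then w 1 else 0) = 0"
      using wv(3) wform[OF wv(1,2)] by metis
    hence "Qt_eval q \<tau> C t (\<lambda>i. w 0 * A0 q \<tau> i + w 1 * A1 q \<tau> i) = 0" using K by blast
    hence "Qt_eval q \<tau> C t v = 0" unfolding w(2) \<phi>_def .
    moreover have "v \<in> g_vecs q \<tau>" unfolding g_vecs_def w(2) \<phi>_def using nz by blast
    ultimately show "v \<in> {v \<in> g_vecs q \<tau>. Qt_eval q \<tau> C t v = 0}" by simp
  qed
  have phis: "\<phi> (\<lambda>i. c * w i) = (\<lambda>i. c * \<phi> w i)" for c w
    unfolding \<phi>_def by (simp add: algebra_simps)
  have pp: "proj_pt (\<phi> w) = \<phi> ` proj_pt w" for w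
  proof -
    have pe: "proj_pt u = (\<lambda>c. \<lambda>i. c * u i) ` {c. c \<noteq> 0}" for u :: "nat \<Rightarrow> 'K"
      unfolding proj_pt_def by blast
    show ?thesis unfolding pe image_image phis ..
  qed
  have eq: "Qt_g_points q \<tau> C t = (\<lambda>P. \<phi> ` P) ` conic_linf_points C"
    unfolding Qt_g_points_def conic_linf_points_def V W_def[symmetric] image_image pp ..
  have inj: "inj_on (\<lambda>P. \<phi> ` P) (conic_linf_points C)"
  proof (rule inj_on_image)
    show "inj_on \<phi> (\<Union> (conic_linf_points C))"
    proof (rule inj_onI)
      fix u u' assume u: "u \<in> \<Union> (conic_linf_points C)" and u': "u' \<in> \<Union> (conic_linf_points C)"
        and e: "\<phi> u = \<phi> u'"
      have z: "x i = 0" if "x \<in> \<Union> (conic_linf_points C)" "i \<ge> 2" for x :: "nat \<Rightarrow> 'K" and i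
      proof -
        from that(1) obtain w c where "w \<in> vecs 3" "w 2 = 0" "x = (\<lambda>i. c * w i)"
          unfolding conic_linf_points_def proj_pt_def by auto
        thus ?thesis using that(2) unfolding vecs_def by (cases "i = 2") auto
      qed
      have "\<phi> u 1 = \<phi> u' 1" "\<phi> u 3 = \<phi> u' 3" using e by auto
      hence "u 0 = u' 0" "u 1 = u' 1" unfolding \<phi>_def A0_def A1_def by auto
      show "u = u'"
      proof
        fix i show "u i = u' i"
          using z[OF u, of i] z[OF u', of i] \<open>u 0 = u' 0\<close> \<open>u 1 = u' 1\<close>
          by (cases "i = 0 \<or> i = 1") auto
      qed
    qed
  qed
  show ?thesis unfolding eq using card_image[OF inj] .
qed


lemma dec_lemma:
  fixes \<tau> :: "'K::field"
  assumes tnF: "\<tau> ^ q \<noteq> \<tau>"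
    and invol: "\<And>x::'K. (x ^ q) ^ q = x"
    and sub: "\<And>x y::'K. (x - y) ^ q = x ^ q - y ^ q"
  shows "c = coord0 q \<tau> c + coord1 q \<tau> c * \<tau> \<and> coord0 q \<tau> c \<in> Fq q \<and> coord1 q \<tau> c \<in> Fq q"
proof -
  have dn: "\<tau> - \<tau> ^ q \<noteq> 0" using tnF by simp
  have uniq: "a = a' \<and> b = b'" if "a \<in> Fq q" "b \<in> Fq q" "a' \<in> Fq q" "b' \<in> Fq q"
    "a + b * \<tau> = a' + b' * \<tau>" for a b a' b'
  proof (cases "b = b'")
    case True thus ?thesis using that(5) by simp
  next
    case False
    have "(b' - b) * \<tau> = a - a'" using that(5) by (simp add: algebra_simps)
    hence tt: "\<tau> = (a - a') / (b' - b)" using False by (simp add: eq_divide_eq mult.commute)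
    have "\<tau> ^ q = (a ^ q - a' ^ q) / (b' ^ q - b ^ q)" unfolding tt power_divide sub ..
    also have "\<dots> = (a - a') / (b' - b)" using that(1-4) by (simp add: Fq_def)
    finally show ?thesis using tnF tt by simp
  qed
  define b0 where "b0 = (c - c ^ q) / (\<tau> - \<tau> ^ q)"
  define a0 where "a0 = c - b0 * \<tau>"
  have b0F: "b0 \<in> Fq q"
  proof -
    have "b0 ^ q = (c ^ q - c) / (\<tau> ^ q - \<tau>)"
      unfolding b0_def power_divide sub invol ..
    also have "\<dots> = b0" unfolding b0_def by (metis minus_diff_eq minus_divide_divide)
    finally show ?thesis by (simp add: Fq_def)
  qed
  have a0F: "a0 \<in> Fq q"
  proof -
    have bq: "b0 ^ q = b0" using b0F by (simp add: Fq_def)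
    have "a0 ^ q = c ^ q - b0 * \<tau> ^ q" unfolding a0_def sub power_mult_distrib bq ..
    also have "\<dots> = a0"
    proof -
      have "b0 * (\<tau> - \<tau> ^ q) = c - c ^ q" unfolding b0_def using dn by simp
      thus ?thesis unfolding a0_def by (simp add: algebra_simps)
    qed
    finally show ?thesis by (simp add: Fq_def)
  qed
  have c0: "c = a0 + b0 * \<tau>" unfolding a0_def by simp
  have e0: "\<exists>!a. a \<in> Fq q \<and> (\<exists>b\<in>Fq q. c = a + b * \<tau>)"
  proof (rule ex1I[of _ a0])
    show "a0 \<in> Fq q \<and> (\<exists>b\<in>Fq q. c = a0 + b * \<tau>)" using a0F b0F c0 by blast
  next
    fix a assume "a \<in> Fq q \<and> (\<exists>b\<in>Fq q. c = a + b * \<tau>)"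
    then obtain b where "a \<in> Fq q" "b \<in> Fq q" "c = a + b * \<tau>" by blast
    hence "a + b * \<tau> = a0 + b0 * \<tau>" using c0 by simp
    thus "a = a0" using uniq[of a b a0 b0] a0F b0F \<open>a \<in> Fq q\<close> \<open>b \<in> Fq q\<close> by blast
  qed
  have e1: "\<exists>!b. b \<in> Fq q \<and> (\<exists>a\<in>Fq q. c = a + b * \<tau>)"
  proof (rule ex1I[of _ b0])
    show "b0 \<in> Fq q \<and> (\<exists>a\<in>Fq q. c = a + b0 * \<tau>)" using a0F b0F c0 by blast
  next
    fix b assume "b \<in> Fq q \<and> (\<exists>a\<in>Fq q. c = a + b * \<tau>)"
    then obtain a where "a \<in> Fq q" "b \<in> Fq q" "c = a + b * \<tau>" by blast
    hence "a + b * \<tau> = a0 + b0 * \<tau>" using c0 by simp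
    thus "b = b0" using uniq[of a b a0 b0] a0F b0F \<open>a \<in> Fq q\<close> \<open>b \<in> Fq q\<close> by blast
  qed
  have "coord0 q \<tau> c = a0" unfolding coord0_def
    by (rule the1_equality[OF e0]) (use a0F b0F c0 in blast)
  moreover have "coord1 q \<tau> c = b0" unfolding coord1_def
    by (rule the1_equality[OF e1]) (use a0F b0F c0 in blast)
  ultimately show ?thesis using a0F b0F c0 by simp
qed

theorem theorem4p1:
  fixes q :: nat and \<tau> t0 t1 :: "'K::{field,finite}"
    and C :: "nat \<Rightarrow> nat \<Rightarrow> 'K" and t :: "'K option"
  assumes "prime_power q"
    and "card (UNIV :: 'K set) = q ^ 2"
    and "primitive_elem \<tau>"
    and "t0 \<in> Fq q" and "t1 \<in> Fq q" and "\<tau> ^ 2 = t1 * \<tau> + t0"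
    and "nondeg_conic C"
    and "\<forall>s. t = Some s \<longrightarrow> s \<in> Fq q"
  shows "(card (conic_linf_points C) = 0 \<longleftrightarrow> card (Qt_g_points q \<tau> C t) = 0)
       \<and> (card (conic_linf_points C) = 1 \<longleftrightarrow> card (Qt_g_points q \<tau> C t) = 1)
       \<and> (card (conic_linf_points C) = 2 \<longleftrightarrow> card (Qt_g_points q \<tau> C t) = 2)"
proof -
  have add: "\<And>x y::'K. (x + y) ^ q = x ^ q + y ^ q" using frob_add[OF assms(1,2)] .
  have q2: "q \<ge> 2"
  proof -
    obtain p k where pk: "prime p" "k > 0" "q = p ^ k" using assms(1) unfolding prime_power_def by auto
    have "p \<ge> 2" using pk(1) prime_ge_2_nat by blast
    hence "p ^ 1 \<le> p ^ k" using pk(2) by (intro power_increasing) auto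
    thus ?thesis using pk \<open>p \<ge> 2\<close> by simp
  qed
  have q0: "q > 0" using q2 by simp
  have invol: "\<And>x::'K. (x ^ q) ^ q = x"
  proof -
    fix x :: 'K
    have "(x ^ q) ^ q = x ^ card (UNIV :: 'K set)" by (simp add: assms(2) power2_eq_square power_mult)
    thus "(x ^ q) ^ q = x" by (simp add: pow_card_same)
  qed
  have sub: "(x - y) ^ q = x ^ q - y ^ q" for x y :: 'K
    using add[of "x - y" y] by (simp add: algebra_simps)
  have cardnz: "card (UNIV - {0::'K}) = q^2 - 1"
    using assms(2) by (simp add: card_Diff_singleton)
  have t0: "\<tau> \<noteq> 0"
  proof
    assume "\<tau> = 0"
    have "x \<in> {0, 1}" for x :: 'K
    proof (cases "x = 0")
      case False
      then obtain n where "x = \<tau> ^ n" using assms(3) unfolding primitive_elem_def by blast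
      thus ?thesis using \<open>\<tau> = 0\<close> by (cases n) auto
    qed simp
    hence "UNIV \<subseteq> {0, 1::'K}" by blast
    hence "card (UNIV :: 'K set) \<le> card {0, 1::'K}" by (intro card_mono) auto
    hence "card (UNIV :: 'K set) \<le> 2" by simp
    moreover have "q^2 \<ge> 2^2" using q2 by (intro power_mono) auto
    ultimately show False using assms(2) by simp
  qed
  have tnF: "\<tau> ^ q \<noteq> \<tau>"
  proof
    assume e: "\<tau> ^ q = \<tau>"
    have "\<tau> ^ q = \<tau> ^ Suc (q - 1)" using q0 by simp
    hence "\<tau> * \<tau> ^ (q - 1) = \<tau> * 1" using e by simp
    hence o: "\<tau> ^ (q - 1) = 1" using t0 by simp
    have "UNIV - {0} \<subseteq> (\<lambda>n. \<tau> ^ n) ` {..<q-1}"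
    proof
      fix x :: 'K assume "x \<in> UNIV - {0}"
      then obtain n where n: "x = \<tau> ^ n" using assms(3) unfolding primitive_elem_def by auto
      have "\<tau> ^ n = \<tau> ^ ((q-1) * (n div (q-1)) + n mod (q-1))" by simp
      also have "\<dots> = (\<tau> ^ (q-1)) ^ (n div (q-1)) * \<tau> ^ (n mod (q-1))"
        by (simp only: power_add power_mult)
      also have "\<dots> = \<tau> ^ (n mod (q-1))" by (simp only: o power_one mult_1_left)
      finally have "x = \<tau> ^ (n mod (q-1))" using n by simp
      moreover have "n mod (q-1) < q - 1" using q2 by simp
      ultimately show "x \<in> (\<lambda>n. \<tau> ^ n) ` {..<q-1}" by blast
    qed
    hence "card (UNIV - {0::'K}) \<le> card ((\<lambda>n. \<tau> ^ n) ` {..<q-1})" by (intro card_mono) auto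
    also have "\<dots> \<le> q - 1" using card_image_le[of "{..<q-1}"] by simp
    finally have "q^2 - 1 \<le> q - 1" using cardnz by simp
    moreover have "q < q^2" using q2 by (simp add: power2_eq_square)
    ultimately show False using q0 by arith
  qed
  have dec: "c = coord0 q \<tau> c + coord1 q \<tau> c * \<tau> \<and> coord0 q \<tau> c \<in> Fq q \<and> coord1 q \<tau> c \<in> Fq q" for c
    by (rule dec_lemma[OF tnF invol sub])
  have "card (Qt_g_points q \<tau> C t) = card (conic_linf_points C)"
    by (rule card_part, rule key[OF add q0 invol tnF dec assms(8)])
  thus ?thesis by simp
qed

end
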